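(* If $(S,K,I)$ is a split graph, then the factor graph $\Phi(S)$ cannot contain an induced path $v_1v_2v_3v_4$ with $\sigma_{23}=1$ and $d_1\geq d_2\leq d_4$.
   Context: A split graph $(S,K,I)$ is a graph $S$ together with a fixed partition $V(S)=K\dot\cup I$, where $K$ is a clique and $I$ is an independent set. For a vertex $v_i$ of $S$, $N_i$ denotes its open neighborhood in $S$ and $d_i=|N_i|$; $\eta_{uv}=|N_u\cap N_v|$. The factor graph $\Phi(S)$ is the loopless multigraph with vertex set $I$ in which, for distinct $u,v\in I$, there is one edge joining $u$ and $v$ for each 2-switch of $S$ acting on $u$ and $v$ (a 2-switch replaces edges $ab,cd$ with $ac,bd$ when $ab,cd\in E(S)$ and $ac,bd\notin E(S)$); equivalently, the multiplicity of $uv$ is $\sigma_{uv}=(d_u-\eta_{uv})(d_v-\eta_{uv})$, and $u,v$ are adjacent iff $\sigma_{uv}>0$; $\sigma_{ij}$ denotes $\sigma_{v_iv_j}$. An induced path in $\Phi(S)$ consists of distinct vertices with consecutive ones adjacent and no other pair adjacent (multiplicities ignored). *)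

theory Defs
  imports Main
begin

definition simple_graph :: "'a set \<Rightarrow> ('a \<Rightarrow> 'a \<Rightarrow> bool) \<Rightarrow> bool" where
  "simple_graph V E \<longleftrightarrow> finite V \<and> (\<forall>u v. E u v \<longrightarrow> u \<in> V \<and> v \<in> V)
     \<and> (\<forall>u v. E u v \<longrightarrow> E v u) \<and> (\<forall>v. \<not> E v v)"

definition split_graph :: "'a set \<Rightarrow> ('a \<Rightarrow> 'a \<Rightarrow> bool) \<Rightarrow> 'a set \<Rightarrow> 'a set \<Rightarrow> bool" where
  "split_graph V E K I \<longleftrightarrow> simple_graph V E \<and> K \<union> I = V \<and> K \<inter> I = {}
     \<and> (\<forall>u\<in>K. \<forall>v\<in>K. u \<noteq> v \<longrightarrow> E u v)
     \<and> (\<forall>u\<in>I. \<forall>v\<in>I. \<not> E u v)"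

definition nbhd :: "'a set \<Rightarrow> ('a \<Rightarrow> 'a \<Rightarrow> bool) \<Rightarrow> 'a \<Rightarrow> 'a set" where
  "nbhd V E v = {u \<in> V. E v u}"

definition deg :: "'a set \<Rightarrow> ('a \<Rightarrow> 'a \<Rightarrow> bool) \<Rightarrow> 'a \<Rightarrow> nat" where
  "deg V E v = card (nbhd V E v)"

definition eta :: "'a set \<Rightarrow> ('a \<Rightarrow> 'a \<Rightarrow> bool) \<Rightarrow> 'a \<Rightarrow> 'a \<Rightarrow> nat" where
  "eta V E u v = card (nbhd V E u \<inter> nbhd V E v)"

(* multiplicity of the edge uv in the factor graph: sigma_uv = (d_u - eta_uv)(d_v - eta_uv) *)
definition sigma :: "'a set \<Rightarrow> ('a \<Rightarrow> 'a \<Rightarrow> bool) \<Rightarrow> 'a \<Rightarrow> 'a \<Rightarrow> nat" where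
  "sigma V E u v = (deg V E u - eta V E u v) * (deg V E v - eta V E u v)"

definition factor_adj :: "'a set \<Rightarrow> ('a \<Rightarrow> 'a \<Rightarrow> bool) \<Rightarrow> 'a set \<Rightarrow> 'a \<Rightarrow> 'a \<Rightarrow> bool" where
  "factor_adj V E I u v \<longleftrightarrow> u \<in> I \<and> v \<in> I \<and> u \<noteq> v \<and> sigma V E u v > 0"

definition factor_induced_P4 :: "'a set \<Rightarrow> ('a \<Rightarrow> 'a \<Rightarrow> bool) \<Rightarrow> 'a set \<Rightarrow> 'a \<Rightarrow> 'a \<Rightarrow> 'a \<Rightarrow> 'a \<Rightarrow> bool" where
  "factor_induced_P4 V E I v1 v2 v3 v4 \<longleftrightarrow>
     v1 \<in> I \<and> v2 \<in> I \<and> v3 \<in> I \<and> v4 \<in> I \<and> distinct [v1, v2, v3, v4]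
     \<and> factor_adj V E I v1 v2 \<and> factor_adj V E I v2 v3 \<and> factor_adj V E I v3 v4
     \<and> \<not> factor_adj V E I v1 v3 \<and> \<not> factor_adj V E I v1 v4 \<and> \<not> factor_adj V E I v2 v4"

end

theory Submission
  imports Defs
begin

lemma card_minus_int: "finite A \<Longrightarrow> card A - card (A \<inter> B) = card (A - B)"
  using card_Diff_subset_Int[of A B] by simp

lemma card_one_diff: "finite A \<Longrightarrow> card (A - B) = 1 \<Longrightarrow> card A = card (A \<inter> B) + 1"
  using card_minus_int[of A B] card_mono[of A "A \<inter> B"] by simp

lemma sig_pos: "finite A \<Longrightarrow> finite B \<Longrightarrow>
  ((card A - card (A \<inter> B)) * (card B - card (B \<inter> A)) > 0) = (\<not> A \<subseteq> B \<and> \<not> B \<subseteq> A)"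
  by (simp add: card_minus_int card_gt_0_iff)

lemma abstract:
  assumes f: "finite N1" "finite N2" "finite N3" "finite N4"
    and i12: "\<not> (N1 \<subseteq> N2 \<or> N2 \<subseteq> N1)" and i23: "\<not> (N2 \<subseteq> N3 \<or> N3 \<subseteq> N2)"
    and i34: "\<not> (N3 \<subseteq> N4 \<or> N4 \<subseteq> N3)"
    and c13: "N1 \<subseteq> N3 \<or> N3 \<subseteq> N1" and c14: "N1 \<subseteq> N4 \<or> N4 \<subseteq> N1"
    and c24: "N2 \<subseteq> N4 \<or> N4 \<subseteq> N2"
    and s1: "card (N2 - N3) = 1" and s2: "card (N3 - N2) = 1"
    and d1: "card N1 \<ge> card N2" and d4: "card N2 \<le> card N4"
  shows False
proof -
  have e2: "card N2 = card (N2 \<inter> N3) + 1" using card_one_diff[OF f(2) s1] .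
  have e3: "card N3 = card (N2 \<inter> N3) + 1" using card_one_diff[OF f(3) s2] by (simp add: Int_commute)
  show False
  proof (cases "N1 \<subseteq> N3")
    case True
    then have "N1 = N3" using card_subset_eq[OF f(3) True] d1 e2 e3
      by (metis card_mono f(3) le_antisym)
    then show False using i34 c14 by blast
  next
    case False
    then have h31: "N3 \<subseteq> N1" using c13 by blast
    obtain b where b: "N3 - N2 = {b}" using s2 card_1_singletonE by blast
    have "N2 \<subseteq> N4"
    proof (rule ccontr)
      assume "\<not> N2 \<subseteq> N4"
      then have "N4 \<subseteq> N2" using c24 by blast
      then have "N4 = N2" using card_subset_eq[OF f(2)] d4 by (metis card_mono f(2) le_antisym)
      then show False using i12 c14 by blast
    qed
    moreover have "b \<notin> N4"
    proof
      assume "b \<in> N4"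
      have "N3 \<subseteq> N4"
      proof
        fix x assume "x \<in> N3"
        show "x \<in> N4"
        proof (cases "x \<in> N2")
          case True then show ?thesis using \<open>N2 \<subseteq> N4\<close> by blast
        next
          case False then have "x \<in> N3 - N2" using \<open>x \<in> N3\<close> by blast
          then have "x = b" using b by simp
          then show ?thesis using \<open>b \<in> N4\<close> by simp
        qed
      qed
      then show False using i34 by blast
    qed
    moreover have "b \<in> N3" using b by blast
    ultimately show False using c14 h31 i12 by blast
  qed
qed

theorem lemma4p3:
  fixes V K I :: "'a set" and E :: "'a \<Rightarrow> 'a \<Rightarrow> bool" and v1 v2 v3 v4 :: 'a
  assumes "split_graph V E K I"
  shows "\<not> (factor_induced_P4 V E I v1 v2 v3 v4 \<and> sigma V E v2 v3 = 1
             \<and> deg V E v1 \<ge> deg V E v2 \<and> deg V E v2 \<le> deg V E v4)"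
proof
  assume H: "factor_induced_P4 V E I v1 v2 v3 v4 \<and> sigma V E v2 v3 = 1
             \<and> deg V E v1 \<ge> deg V E v2 \<and> deg V E v2 \<le> deg V E v4"
  have fV: "finite V" using assms unfolding split_graph_def simple_graph_def by blast
  have fin: "\<And>v. finite (nbhd V E v)" unfolding nbhd_def using fV by simp
  have adj: "\<And>u v. u \<in> I \<Longrightarrow> v \<in> I \<Longrightarrow> u \<noteq> v \<Longrightarrow> factor_adj V E I u v =
     (\<not> nbhd V E u \<subseteq> nbhd V E v \<and> \<not> nbhd V E v \<subseteq> nbhd V E u)"
    unfolding factor_adj_def sigma_def deg_def eta_def
    using sig_pos[OF fin fin] by (metis Int_commute)
  have s: "(card (nbhd V E v2 - nbhd V E v3)) * card (nbhd V E v3 - nbhd V E v2) = 1"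
    using H unfolding sigma_def deg_def eta_def
    by (metis card_minus_int fin Int_commute)
  have P: "v1 \<in> I" "v2 \<in> I" "v3 \<in> I" "v4 \<in> I" "distinct [v1, v2, v3, v4]"
     "factor_adj V E I v1 v2" "factor_adj V E I v2 v3" "factor_adj V E I v3 v4"
     "\<not> factor_adj V E I v1 v3" "\<not> factor_adj V E I v1 v4" "\<not> factor_adj V E I v2 v4"
    using H unfolding factor_induced_P4_def by blast+
  have s1: "card (nbhd V E v2 - nbhd V E v3) = 1" and s2: "card (nbhd V E v3 - nbhd V E v2) = 1"
    using s by simp_all
  show False
  proof (rule abstract[OF fin fin fin fin, of v1 v2 v3 v4])
    show "\<not> (nbhd V E v1 \<subseteq> nbhd V E v2 \<or> nbhd V E v2 \<subseteq> nbhd V E v1)"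
      using adj[of v1 v2] P by auto
    show "\<not> (nbhd V E v2 \<subseteq> nbhd V E v3 \<or> nbhd V E v3 \<subseteq> nbhd V E v2)"
      using adj[of v2 v3] P by auto
    show "\<not> (nbhd V E v3 \<subseteq> nbhd V E v4 \<or> nbhd V E v4 \<subseteq> nbhd V E v3)"
      using adj[of v3 v4] P by auto
    show "nbhd V E v1 \<subseteq> nbhd V E v3 \<or> nbhd V E v3 \<subseteq> nbhd V E v1"
      using adj[of v1 v3] P by auto
    show "nbhd V E v1 \<subseteq> nbhd V E v4 \<or> nbhd V E v4 \<subseteq> nbhd V E v1"
      using adj[of v1 v4] P by auto
    show "nbhd V E v2 \<subseteq> nbhd V E v4 \<or> nbhd V E v4 \<subseteq> nbhd V E v2"
      using adj[of v2 v4] P by auto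
    show "card (nbhd V E v2 - nbhd V E v3) = 1" by (rule s1)
    show "card (nbhd V E v3 - nbhd V E v2) = 1" by (rule s2)
    show "card (nbhd V E v2) \<le> card (nbhd V E v1)" using H unfolding deg_def by blast
    show "card (nbhd V E v2) \<le> card (nbhd V E v4)" using H unfolding deg_def by blast
  qed
qed

end
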